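(* Let $k\ge1$ and $n\ge1$, and let $a_1,\dots,a_n\in A$ be such that for each $i$ there is an integer $p_i>0$ with $a_i\in A(100^{k^2}p_i-1)$. Suppose $a_i\notin B_1+\dots+B_k$ for every $i$. Then for all non-negative integers $m_1,\dots,m_n$, $$a_1x_{m_1}a_2x_{m_2}\cdots a_nx_{m_n}\notin B_1+\dots+B_k.$$
   Context: Let $K$ be a field and $A$ the free associative (non-unital) $K$-algebra on free generators $x_0,x_1,x_2,\dots$, with $K$-basis of monomials; $A^1$ is $A$ with unity adjoined. For $n\ge1$, $A(n)$ is the $K$-span of monomials of length $n$, and $A(0)=K$. For a monomial $s=x_{i_1}\cdots x_{i_n}$ write $s[q]=x_{i_q}$. For $j\ge1$, $Z_j$ is the set of all elements $a\in A$ of one of the forms: (1) $a=\kappa s$, $\kappa\in K$, $s$ a monomial of length $100^{j^2}-1$ with $s[3^p\cdot100^{(j-1)^2}]=s[3^q\cdot100^{(j-1)^2}]$ for some $0\le p<q\le j$; (2) $a=\kappa(s_1+s_2)$, $\kappa\in K$, $s_1,s_2$ monomials of length $100^{j^2}-1$, with integers $0\le p<q\le j$ and $l_1>l_2\ge0$ such that $s_1$ has $x_{l_1}$ at position $3^p\cdot100^{(j-1)^2}$ and $x_{l_2}$ at position $3^q\cdot100^{(j-1)^2}$, $s_2$ has $x_{l_2}$ and $x_{l_1}$ at these positions respectively, and $s_1,s_2$ agree at all other positions. $B_j=\sum_{m\ge0}A(m\cdot100^{j^2})\,Z_j\,A^1$ (the $K$-span of products $uzv$ with $u\in A(m\cdot100^{j^2})$,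 $m\ge0$, $z\in Z_j$, $v\in A^1$). *)

theory Defs
  imports Main
begin

text \<open>Elements of the free unital associative K-algebra on generators x_0, x_1, ...
  are represented as finitely supported coefficient functions on words (nat list);
  the word [i_1,...,i_n] stands for the monomial x_{i_1}...x_{i_n}, the empty word for 1.\<close>

type_synonym 'k elt = "nat list \<Rightarrow> 'k"

definition fsupp :: "'k::zero elt \<Rightarrow> bool" where
  "fsupp f \<longleftrightarrow> finite {w. f w \<noteq> 0}"

definition A1 :: "'k::field elt set" where
  "A1 = {f. fsupp f}"

definition Afree :: "'k::field elt set" where
  "Afree = {f. fsupp f \<and> f [] = 0}"

definition Ahom :: "nat \<Rightarrow> 'k::field elt set" where
  "Ahom n = {f. fsupp f \<and> (\<forall>w. f w \<noteq> 0 \<longrightarrow> length w = n)}"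

definition mono :: "nat list \<Rightarrow> 'k::field elt" where
  "mono s = (\<lambda>w. if w = s then 1 else 0)"

definition gen :: "nat \<Rightarrow> 'k::field elt" where
  "gen i = mono [i]"

definition smul :: "'k::field \<Rightarrow> 'k elt \<Rightarrow> 'k elt" where
  "smul c f = (\<lambda>w. c * f w)"

definition amul :: "'k::field elt \<Rightarrow> 'k elt \<Rightarrow> 'k elt" where
  "amul f g = (\<lambda>w. \<Sum>i\<in>{0..length w}. f (take i w) * g (drop i w))"

inductive_set kspan :: "'k::field elt set \<Rightarrow> 'k elt set" for S where
  zero: "(\<lambda>_. 0) \<in> kspan S"
| base: "x \<in> S \<Longrightarrow> x \<in> kspan S"
| add: "x \<in> kspan S \<Longrightarrow> y \<in> kspan S \<Longrightarrow> (\<lambda>w. x w + y w) \<in> kspan S"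
| scal: "x \<in> kspan S \<Longrightarrow> smul c x \<in> kspan S"

text \<open>Length 100^(j^2) - 1 and (1-based) positions 3^p * 100^((j-1)^2).
  For a list s, the 1-based entry s[q] is s ! (q - 1).\<close>
definition Zlen :: "nat \<Rightarrow> nat" where
  "Zlen j = 100 ^ (j^2) - 1"

definition Zpos :: "nat \<Rightarrow> nat \<Rightarrow> nat" where
  "Zpos p j = 3 ^ p * 100 ^ ((j - 1)^2)"

definition Zset :: "nat \<Rightarrow> 'k::field elt set" where
  "Zset j = {a.
     (\<exists>\<kappa> s. length s = Zlen j \<and> a = smul \<kappa> (mono s) \<and>
        (\<exists>p q. p < q \<and> q \<le> j \<and> s ! (Zpos p j - 1) = s ! (Zpos q j - 1)))
   \<or> (\<exists>\<kappa> s1 s2 p q l1 l2. length s1 = Zlen j \<and> length s2 = Zlen j \<and>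
        p < q \<and> q \<le> j \<and> l2 < l1 \<and>
        s1 ! (Zpos p j - 1) = l1 \<and> s1 ! (Zpos q j - 1) = l2 \<and>
        s2 ! (Zpos p j - 1) = l2 \<and> s2 ! (Zpos q j - 1) = l1 \<and>
        (\<forall>t < Zlen j. t \<noteq> Zpos p j - 1 \<and> t \<noteq> Zpos q j - 1 \<longrightarrow> s1 ! t = s2 ! t) \<and>
        a = smul \<kappa> (\<lambda>w. mono s1 w + mono s2 w))}"

definition Bgen :: "nat \<Rightarrow> 'k::field elt set" where
  "Bgen j = {amul (amul u z) v | u z v m. u \<in> Ahom (m * 100 ^ (j^2)) \<and> z \<in> Zset j \<and> v \<in> A1}"

definition Bj :: "nat \<Rightarrow> 'k::field elt set" where
  "Bj j = kspan (Bgen j)"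

definition Bsum :: "nat \<Rightarrow> 'k::field elt set" where
  "Bsum k = {(\<lambda>w. \<Sum>j\<in>{1..k}. b j w) | b. \<forall>j\<in>{1..k}. b j \<in> Bj j}"

definition interleave :: "nat \<Rightarrow> (nat \<Rightarrow> 'k::field elt) \<Rightarrow> (nat \<Rightarrow> nat) \<Rightarrow> 'k elt" where
  "interleave n a m = foldl (\<lambda>acc i. amul (amul acc (a i)) (gen (m i))) (mono []) [1..<n+1]"

end

theory Submission imports Defs "HOL.Vector_Spaces" "HOL-Library.Function_Algebras" begin


definition supp :: "'k::zero elt \<Rightarrow> nat list set" where "supp f = {w. f w \<noteq> 0}"
definition pair :: "'k::field elt \<Rightarrow> 'k elt \<Rightarrow> 'k" where
  "pair f \<psi> = (\<Sum>w\<in>supp f. f w * \<psi> w)"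

lemma fsupp_supp: "fsupp f \<longleftrightarrow> finite (supp f)" by (simp add: fsupp_def supp_def)

lemma pair_superset: "finite T \<Longrightarrow> supp f \<subseteq> T \<Longrightarrow> pair f \<psi> = (\<Sum>w\<in>T. f w * \<psi> w)"
  unfolding pair_def by (rule sum.mono_neutral_left) (auto simp: supp_def)

lemma pair_cong: "(\<And>w. f w \<noteq> 0 \<Longrightarrow> \<psi> w = \<phi> w) \<Longrightarrow> pair f \<psi> = pair f \<phi>"
  unfolding pair_def supp_def by (rule sum.cong) auto

lemma pair_zero_on: "(\<And>w. f w \<noteq> 0 \<Longrightarrow> \<psi> w = 0) \<Longrightarrow> pair f \<psi> = 0"
  unfolding pair_def supp_def by (rule sum.neutral) auto

lemma pair_cmult: "pair f (\<lambda>w. c * \<psi> w) = c * pair f \<psi>"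
  unfolding pair_def sum_distrib_left by (rule sum.cong) (auto simp: algebra_simps)

lemma pair_multc: "pair f (\<lambda>w. \<psi> w * c) = pair f \<psi> * c"
  unfolding pair_def sum_distrib_right by (rule sum.cong) (auto simp: algebra_simps)

lemma supp_mono: "supp (mono s :: 'k::field elt) = {s}"
  by (auto simp: supp_def mono_def)

lemma pair_mono: "pair (mono s) \<psi> = \<psi> s"
  unfolding pair_def supp_mono by (simp add: mono_def)

lemma pair_gen: "pair (gen i) \<psi> = \<psi> [i]"
  by (simp add: gen_def pair_mono)

lemma fsupp_mono: "fsupp (mono s :: 'k::field elt)"
  by (simp add: fsupp_supp supp_mono)

lemma amul_formula:
  fixes f g :: "'k::field elt"
  assumes "fsupp f" "fsupp g"
  shows "amul f g w = (\<Sum>p\<in>{p\<in>supp f \<times> supp g. fst p @ snd p = w}. f (fst p) * g (snd p))"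
proof -
  let ?I = "{i\<in>{0..length w}. take i w \<in> supp f \<and> drop i w \<in> supp g}"
  have "amul f g w = (\<Sum>i\<in>{0..length w}. f (take i w) * g (drop i w))" by (simp add: amul_def)
  also have "\<dots> = (\<Sum>i\<in>?I. f (take i w) * g (drop i w))"
    by (rule sum.mono_neutral_right) (auto simp: supp_def)
  also have "\<dots> = (\<Sum>p\<in>{p\<in>supp f \<times> supp g. fst p @ snd p = w}. f (fst p) * g (snd p))"
  proof (rule sum.reindex_bij_witness[where i="\<lambda>p. length (fst p)" and j="\<lambda>i. (take i w, drop i w)"])
    fix a assume "a \<in> ?I" then show "length (fst (take a w, drop a w)) = a" by simp
  next
    fix a assume "a \<in> ?I" then show "(take a w, drop a w) \<in> {p\<in>supp f \<times> supp g. fst p @ snd p = w}" by simp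
  next
    fix b assume b: "b \<in> {p\<in>supp f \<times> supp g. fst p @ snd p = w}"
    then have "w = fst b @ snd b" by simp
    then show "(take (length (fst b)) w, drop (length (fst b)) w) = b" by (simp add: prod_eq_iff)
  next
    fix b assume b: "b \<in> {p\<in>supp f \<times> supp g. fst p @ snd p = w}"
    then have w: "w = fst b @ snd b" by simp
    show "length (fst b) \<in> ?I" using b by (auto simp: w mem_Times_iff)
  next
    fix a assume "a \<in> ?I" then show "f (fst (take a w, drop a w)) * g (snd (take a w, drop a w)) = f (take a w) * g (drop a w)" by simp
  qed
  finally show ?thesis .
qed

lemma supp_amul:
  fixes f g :: "'k::field elt"
  assumes "fsupp f" "fsupp g"
  shows "supp (amul f g) \<subseteq> (\<lambda>p. fst p @ snd p) ` (supp f \<times> supp g)"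
proof
  fix w assume "w \<in> supp (amul f g)"
  then have "(\<Sum>p\<in>{p\<in>supp f \<times> supp g. fst p @ snd p = w}. f (fst p) * g (snd p)) \<noteq> 0"
    using amul_formula[OF assms] by (simp add: supp_def)
  then have "{p\<in>supp f \<times> supp g. fst p @ snd p = w} \<noteq> {}" by (metis sum.empty)
  then obtain p where "p \<in> supp f \<times> supp g" "fst p @ snd p = w"
    by blast
  then show "w \<in> (\<lambda>p. fst p @ snd p) ` (supp f \<times> supp g)" by force
qed

lemma fsupp_amul:
  fixes f g :: "'k::field elt"
  assumes "fsupp f" "fsupp g"
  shows "fsupp (amul f g)"
  using supp_amul[OF assms] assms by (simp add: fsupp_supp finite_subset)

lemma pair_amul_double:
  fixes f g :: "'k::field elt"
  assumes "fsupp f" "fsupp g"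
  shows "pair (amul f g) \<Psi> = (\<Sum>x\<in>supp f. \<Sum>y\<in>supp g. f x * g y * \<Psi> (x @ y))"
proof -
  let ?P = "supp f \<times> supp g"
  let ?a = "\<lambda>p::nat list \<times> nat list. fst p @ snd p"
  let ?T = "?a ` ?P"
  have fP: "finite ?P" using assms by (simp add: fsupp_supp)
  have fT: "finite ?T" using fP by simp
  have "pair (amul f g) \<Psi> = (\<Sum>w\<in>?T. amul f g w * \<Psi> w)"
    by (rule pair_superset[OF fT supp_amul[OF assms]])
  also have "\<dots> = (\<Sum>w\<in>?T. \<Sum>p\<in>{p\<in>?P. ?a p = w}. f (fst p) * g (snd p) * \<Psi> (?a p))"
    by (rule sum.cong[OF refl]) (simp add: amul_formula[OF assms] sum_distrib_right)
  also have "\<dots> = (\<Sum>p\<in>?P. f (fst p) * g (snd p) * \<Psi> (?a p))"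
    by (rule sum.group[OF fP fT, where g="?a" and h="\<lambda>p. f (fst p) * g (snd p) * \<Psi> (?a p)"]) simp
  also have "\<dots> = (\<Sum>x\<in>supp f. \<Sum>y\<in>supp g. f x * g y * \<Psi> (x @ y))"
    by (simp add: sum.cartesian_product case_prod_beta)
  finally show ?thesis .
qed

lemma pair_amul1:
  fixes f g :: "'k::field elt"
  assumes "fsupp f" "fsupp g"
  shows "pair (amul f g) \<Psi> = pair f (\<lambda>x. pair g (\<lambda>y. \<Psi> (x @ y)))"
  unfolding pair_amul_double[OF assms]
  unfolding pair_def sum_distrib_left
  by (intro sum.cong refl) (simp add: mult.assoc)

lemma pair_amul2:
  fixes f g :: "'k::field elt"
  assumes "fsupp f" "fsupp g"
  shows "pair (amul f g) \<Psi> = pair g (\<lambda>y. pair f (\<lambda>x. \<Psi> (x @ y)))"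
  unfolding pair_amul_double[OF assms]
  unfolding pair_def sum_distrib_left
  by (subst sum.swap) (intro sum.cong refl, simp add: algebra_simps)

lemma Ahom_amul:
  fixes f g :: "'k::field elt"
  assumes "f \<in> Ahom d" "g \<in> Ahom e"
  shows "amul f g \<in> Ahom (d + e)"
proof -
  have ff: "fsupp f" "fsupp g" using assms by (auto simp: Ahom_def)
  have "length w = d + e" if "amul f g w \<noteq> 0" for w
  proof -
    have "w \<in> supp (amul f g)" using that by (simp add: supp_def)
    then obtain x y where "x \<in> supp f" "y \<in> supp g" "w = x @ y" using supp_amul[OF ff] by auto
    then show ?thesis using assms by (auto simp: Ahom_def supp_def)
  qed
  then show ?thesis using fsupp_amul[OF ff] by (auto simp: Ahom_def)
qed

lemma pair_add:
  fixes f g :: "'k::field elt"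
  assumes "fsupp f" "fsupp g"
  shows "pair (\<lambda>w. f w + g w) \<psi> = pair f \<psi> + pair g \<psi>"
proof -
  let ?T = "supp f \<union> supp g"
  have fT: "finite ?T" using assms by (simp add: fsupp_supp)
  have "pair (\<lambda>w. f w + g w) \<psi> = (\<Sum>w\<in>?T. (f w + g w) * \<psi> w)"
    by (rule pair_superset[OF fT]) (auto simp: supp_def)
  also have "\<dots> = (\<Sum>w\<in>?T. f w * \<psi> w) + (\<Sum>w\<in>?T. g w * \<psi> w)"
    by (simp add: sum.distrib distrib_right)
  also have "\<dots> = pair f \<psi> + pair g \<psi>"
    using pair_superset[OF fT, of f] pair_superset[OF fT, of g] by auto
  finally show ?thesis .
qed

lemma pair_smul: "pair (smul c f) \<psi> = c * pair f \<psi>"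
proof (cases "c = 0")
  case True then show ?thesis by (simp add: pair_def smul_def supp_def)
next
  case False
  then have "supp (smul c f) = supp f" by (auto simp: supp_def smul_def)
  then show ?thesis by (simp add: pair_def smul_def sum_distrib_left mult.assoc)
qed

lemma fsupp_add: "fsupp f \<Longrightarrow> fsupp g \<Longrightarrow> fsupp (\<lambda>w. f w + (g w::'k::field))"
  unfolding fsupp_supp
  by (rule finite_subset[of _ "supp f \<union> supp g"]) (auto simp: supp_def)

lemma fsupp_smul: "fsupp f \<Longrightarrow> fsupp (smul c f)"
  unfolding fsupp_supp
  by (rule finite_subset[of _ "supp f"]) (auto simp: supp_def smul_def)




global_interpretation fvs: vector_space "smul :: 'k::field \<Rightarrow> 'k elt \<Rightarrow> 'k elt"
  by unfold_locales (auto simp: smul_def fun_eq_iff algebra_simps)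

global_interpretation kvs: vector_space "(*) :: 'k::field \<Rightarrow> 'k \<Rightarrow> 'k"
  by unfold_locales (auto simp: algebra_simps)

global_interpretation fvp: vector_space_pair "smul :: 'k::field \<Rightarrow> 'k elt \<Rightarrow> 'k elt" "(*) :: 'k \<Rightarrow> 'k \<Rightarrow> 'k"
  by unfold_locales

lemma separate:
  fixes S :: "'k::field elt set"
  assumes "fvs.subspace S" "a \<notin> S"
  shows "\<exists>g. Vector_Spaces.linear smul ((*)::'k\<Rightarrow>'k\<Rightarrow>'k) g \<and> (\<forall>s\<in>S. g s = 0) \<and> g a = 1"
proof -
  obtain B where B: "B \<subseteq> S" "fvs.independent B" "S \<subseteq> fvs.span B"
    using fvs.maximal_independent_subset by blast
  have sp: "fvs.span B \<subseteq> S" using B(1) assms(1) fvs.span_minimal by blast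
  have aB: "a \<notin> fvs.span B" using sp assms(2) by blast
  hence "a \<notin> B" using fvs.span_base by blast
  have ind: "fvs.independent (insert a B)" using fvs.independent_insertI[OF aB B(2)] .
  obtain g where g: "Vector_Spaces.linear smul ((*)::'k\<Rightarrow>'k\<Rightarrow>'k) g"
     "\<forall>x\<in>insert a B. g x = (if x = a then 1 else 0)"
    using fvp.linear_independent_extend[OF ind, of "\<lambda>x. if x = a then 1 else 0"] by blast
  have "\<forall>s\<in>S. g s = 0"
  proof
    fix s assume "s \<in> S"
    then have "s \<in> fvs.span B" using B(3) by blast
    then show "g s = 0" using fvp.linear_eq_0_on_span[OF g(1)] g(2) \<open>a \<notin> B\<close> by (metis insert_iff)
  qed
  then show ?thesis using g by auto
qed



lemma sum_fun_app: "(\<Sum>i\<in>A. (f i :: 'a \<Rightarrow> 'b::comm_monoid_add)) x = (\<Sum>i\<in>A. f i x)"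
  by (induct A rule: infinite_finite_induct) auto

definition Kill :: "nat \<Rightarrow> 'k::field elt \<Rightarrow> bool" where
  "Kill k \<Psi> \<longleftrightarrow> (\<forall>j\<in>{1..k}. \<forall>z\<in>(Zset j :: 'k elt set). \<forall>x y.
      length x mod 100^(j^2) = 0 \<longrightarrow> pair z (\<lambda>w. \<Psi> (x @ w @ y)) = 0)"

lemma Zset_props:
  assumes "(z::'k::field elt) \<in> Zset j"
  shows "fsupp z" "z w \<noteq> 0 \<Longrightarrow> length w = Zlen j"
   apply (use assms in \<open>unfold Zset_def, auto intro!: fsupp_smul fsupp_add fsupp_mono\<close>)
  using assms by (auto simp: Zset_def smul_def mono_def split: if_splits)

lemma Kill_kspan:
  assumes K: "Kill k \<Psi>" and j: "j \<in> {1..k}" and b: "b \<in> kspan (Bgen j)"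
  shows "fsupp b \<and> pair b \<Psi> = 0"
  using b
proof (induction rule: kspan.induct)
  case zero
  then show ?case by (auto simp: fsupp_def intro: pair_zero_on)
next
  case (base x)
  then obtain u z v m where x: "x = amul (amul u z) v" and u: "u \<in> Ahom (m * 100 ^ (j^2))"
    and z: "z \<in> Zset j" and v: "v \<in> A1" by (auto simp: Bgen_def)
  have fu: "fsupp u" using u by (simp add: Ahom_def)
  have fz: "fsupp z" using Zset_props[OF z] by simp
  have fv: "fsupp v" using v by (simp add: A1_def)
  have fuz: "fsupp (amul u z)" using fsupp_amul[OF fu fz] .
  have "pair x \<Psi> = pair v (\<lambda>y. pair u (\<lambda>x. pair z (\<lambda>w. \<Psi> ((x @ w) @ y))))"
    unfolding x pair_amul2[OF fuz fv] pair_amul1[OF fu fz] ..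
  also have "\<dots> = 0"
  proof (rule pair_zero_on, rule pair_zero_on)
    fix y x0 assume "u x0 \<noteq> 0"
    then have "length x0 = m * 100 ^ (j^2)" using u by (auto simp: Ahom_def)
    then have "length x0 mod 100^(j^2) = 0" by simp
    then show "pair z (\<lambda>w. \<Psi> ((x0 @ w) @ y)) = 0" using K j z unfolding Kill_def by simp
  qed
  finally show ?case using fsupp_amul[OF fuz fv] x by simp
next
  case (add x y)
  then show ?case by (simp add: pair_add fsupp_add)
next
  case (scal x c)
  then show ?case by (simp add: pair_smul fsupp_smul)
qed

lemma sum_family:
  assumes "finite J" "\<forall>j\<in>J. fsupp (b j) \<and> pair (b j) \<Psi> = (0::'k::field)"
  shows "fsupp (\<lambda>w. \<Sum>j\<in>J. b j w) \<and> pair (\<lambda>w. \<Sum>j\<in>J. b j w) \<Psi> = 0"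
  using assms
proof (induction J rule: finite_induct)
  case empty
  then show ?case by (auto simp: fsupp_def intro: pair_zero_on)
next
  case (insert x F)
  have e: "(\<lambda>w. \<Sum>j\<in>insert x F. b j w) = (\<lambda>w. b x w + (\<lambda>w. \<Sum>j\<in>F. b j w) w)"
    using insert.hyps by simp
  show ?case unfolding e using insert by (simp add: pair_add fsupp_add)
qed

lemma Kill_Bsum:
  assumes K: "Kill k \<Psi>" and b: "b \<in> Bsum k"
  shows "fsupp b \<and> pair b \<Psi> = 0"
proof -
  obtain bb where b: "b = (\<lambda>w. \<Sum>j\<in>{1..k}. bb j w)" "\<forall>j\<in>{1..k}. bb j \<in> Bj j"
    using b by (auto simp: Bsum_def)
  show ?thesis unfolding b(1)
    by (rule sum_family) (use b(2) Kill_kspan[OF K] in \<open>auto simp: Bj_def\<close>)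
qed

lemma Bgen_Bsum:
  assumes "j \<in> {1..k}" "e \<in> Bgen j"
  shows "e \<in> (Bsum k :: 'k::field elt set)"
proof -
  let ?b = "\<lambda>i. (\<lambda>w. if i = j then e w else (0::'k))"
  have "\<forall>i\<in>{1..k}. ?b i \<in> Bj i"
  proof
    fix i assume "i \<in> {1..k}"
    show "?b i \<in> Bj i"
    proof (cases "i = j")
      case True
      then show ?thesis using assms(2) by (simp add: Bj_def kspan.base)
    next
      case False
      then show ?thesis by (simp add: Bj_def kspan.zero)
    qed
  qed
  moreover have "e = (\<lambda>w. \<Sum>i\<in>{1..k}. ?b i w)" using assms(1) by (simp add: fun_eq_iff)
  ultimately show ?thesis unfolding Bsum_def mem_Collect_eq
    by (intro exI[where x="?b"] conjI) auto
qed

lemma Bsum_subspace: "fvs.subspace (Bsum k :: 'k::field elt set)"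
proof (rule fvs.subspaceI)
  have "(0::'k elt) = (\<lambda>w. \<Sum>j\<in>{1..k}. (\<lambda>w. 0) w)" by (simp add: fun_eq_iff)
  moreover have "\<forall>j\<in>{1..k}. (\<lambda>w. 0::'k) \<in> Bj j" by (simp add: Bj_def kspan.zero)
  ultimately show "(0::'k elt) \<in> Bsum k" unfolding Bsum_def mem_Collect_eq
    by (intro exI[where x="\<lambda>j. (\<lambda>w. 0::'k)"] conjI) auto
next
  fix x y :: "'k elt" assume "x \<in> Bsum k" "y \<in> Bsum k"
  then obtain bx by' where x: "x = (\<lambda>w. \<Sum>j\<in>{1..k}. bx j w)" "\<forall>j\<in>{1..k}. bx j \<in> Bj j"
    and y: "y = (\<lambda>w. \<Sum>j\<in>{1..k}. by' j w)" "\<forall>j\<in>{1..k}. by' j \<in> Bj j"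
    by (auto simp: Bsum_def)
  have "x + y = (\<lambda>w. \<Sum>j\<in>{1..k}. (\<lambda>w. bx j w + by' j w) w)"
    by (simp add: x y fun_eq_iff sum.distrib)
  moreover have "\<forall>j\<in>{1..k}. (\<lambda>w. bx j w + by' j w) \<in> Bj j"
    using x(2) y(2) by (simp add: Bj_def kspan.add)
  ultimately show "x + y \<in> Bsum k" unfolding Bsum_def mem_Collect_eq
    by (intro exI[where x="\<lambda>j. (\<lambda>w. bx j w + by' j w)"] conjI) auto
next
  fix c and x :: "'k elt" assume "x \<in> Bsum k"
  then obtain bx where x: "x = (\<lambda>w. \<Sum>j\<in>{1..k}. bx j w)" "\<forall>j\<in>{1..k}. bx j \<in> Bj j"
    by (auto simp: Bsum_def)
  have "smul c x = (\<lambda>w. \<Sum>j\<in>{1..k}. smul c (bx j) w)"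
    by (simp add: x fun_eq_iff smul_def sum_distrib_left)
  moreover have "\<forall>j\<in>{1..k}. smul c (bx j) \<in> Bj j"
    using x(2) by (simp add: Bj_def kspan.scal)
  ultimately show "smul c x \<in> Bsum k" unfolding Bsum_def mem_Collect_eq
    by (intro exI[where x="\<lambda>j. smul c (bx j)"] conjI) auto
qed

lemma fsupp_expand:
  assumes "fsupp (f::'k::field elt)"
  shows "f = (\<Sum>w\<in>supp f. smul (f w) (mono w))"
proof (rule ext)
  fix v
  have "(\<Sum>w\<in>supp f. smul (f w) (mono w)) v = (\<Sum>w\<in>supp f. (if v = w then f w else 0))"
    by (simp add: sum_fun_app smul_def mono_def) (intro sum.cong, auto)
  also have "\<dots> = f v" using assms by (simp add: fsupp_supp supp_def)
  finally show "f v = (\<Sum>w\<in>supp f. smul (f w) (mono w)) v" by simp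
qed

lemma exists_Kill:
  assumes "fsupp (a::'k::field elt)" "a \<notin> Bsum k"
  shows "\<exists>\<psi>. Kill k \<psi> \<and> pair a \<psi> \<noteq> 0"
proof -
  obtain g where g: "Vector_Spaces.linear smul ((*)::'k\<Rightarrow>'k\<Rightarrow>'k) g"
     "\<forall>s\<in>Bsum k. g s = 0" "g a = 1"
    using separate[OF Bsum_subspace assms(2)] by blast
  define \<psi> where "\<psi> w = g (mono w)" for w
  have pg: "pair f \<psi> = g f" if "fsupp f" for f
  proof -
    have "g f = g (\<Sum>w\<in>supp f. smul (f w) (mono w))" using fsupp_expand[OF that] by simp
    also have "\<dots> = (\<Sum>w\<in>supp f. f w * \<psi> w)"
      by (simp add: fvp.linear_sum[OF g(1)] fvp.linear_scale[OF g(1)] \<psi>_def)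
    finally show ?thesis by (simp add: pair_def)
  qed
  have "Kill k \<psi>"
    unfolding Kill_def
  proof (intro ballI allI impI)
    fix j z and x y :: "nat list" assume j: "j \<in> {1..k}" and z: "z \<in> (Zset j :: 'k elt set)"
      and x: "length x mod 100 ^ (j^2) = 0"
    let ?e = "amul (amul (mono x) z) (mono y) :: 'k elt"
    have fz: "fsupp z" using Zset_props[OF z] by simp
    have fxz: "fsupp (amul (mono x) z)" using fsupp_amul[OF fsupp_mono fz] .
    have "length x div 100^(j^2) * 100^(j^2) = length x"
      using x by (metis add.right_neutral div_mult_mod_eq)
    then have "mono x \<in> (Ahom (length x div 100^(j^2) * 100^(j^2)) :: 'k elt set)"
      using fsupp_mono[of x] by (simp add: Ahom_def mono_def)
    moreover have "(mono y :: 'k elt) \<in> A1" by (simp add: A1_def fsupp_mono)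
    ultimately have "?e \<in> Bgen j" using z unfolding Bgen_def by blast
    then have "?e \<in> Bsum k" using Bgen_Bsum[OF j] by blast
    then have "g ?e = 0" using g(2) by blast
    moreover have "pair ?e \<psi> = g ?e" using pg fsupp_amul[OF fxz fsupp_mono] by blast
    moreover have "pair ?e \<psi> = pair z (\<lambda>w. \<psi> (x @ w @ y))"
      unfolding pair_amul2[OF fxz fsupp_mono] pair_mono pair_amul1[OF fsupp_mono fz] by simp
    ultimately show "pair z (\<lambda>w. \<psi> (x @ w @ y)) = 0" by simp
  qed
  moreover have "pair a \<psi> \<noteq> 0" using pg[OF assms(1)] g(3) by simp
  ultimately show ?thesis by blast
qed




lemma NN_dvd: "j \<le> k \<Longrightarrow> (100::nat) ^ (j^2) dvd 100 ^ (k^2)"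
  by (rule le_imp_power_dvd) (simp add: power_mono)

lemma NN_ge: "j \<ge> 1 \<Longrightarrow> (100::nat) ^ (j^2) \<ge> 100"
proof -
  assume "j \<ge> 1"
  then have "j^2 \<ge> 1" by (simp add: one_le_power)
  then have "(100::nat) ^ 1 \<le> 100 ^ (j^2)" by (rule power_increasing) simp
  then show ?thesis by simp
qed

lemma Kill_step:
  fixes \<Psi> \<psi> :: "'k::field elt"
  assumes K1: "Kill k \<Psi>" and K2: "Kill k \<psi>"
    and dd: "100^(k^2) dvd d" and Ld: "100^(k^2) dvd (L + 1)"
  shows "Kill k (\<lambda>w. if length w = d + L + 1 \<and> w ! (d + L) = c
                      then \<Psi> (take d w) * \<psi> (take L (drop d w)) else 0)"
  unfolding Kill_def
proof (intro ballI allI impI)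
  fix j z and x y :: "nat list"
  assume j: "j \<in> {1..k}" and z: "z \<in> (Zset j :: 'k elt set)" and x: "length x mod 100 ^ (j^2) = 0"
  define N where "N = (100::nat) ^ (j^2)"
  define e where "e = Zlen j"
  have N100: "N \<ge> 100" using NN_ge j by (simp add: N_def)
  have eN: "e + 1 = N" using N100 by (simp add: e_def Zlen_def N_def)
  have Nk: "N dvd 100^(k^2)" using NN_dvd j by (simp add: N_def)
  have Nd: "N dvd d" using dvd_trans[OF Nk dd] .
  have NL: "N dvd (L + 1)" using dvd_trans[OF Nk Ld] .
  have Nx: "N dvd length x" using x by (simp add: N_def dvd_eq_mod_eq_0)
  have zl: "\<And>w. z w \<noteq> 0 \<Longrightarrow> length w = e" using Zset_props(2)[OF z] by (simp add: e_def)
  let ?P = "\<lambda>w::nat list. if length w = d + L + 1 \<and> w ! (d + L) = c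
                      then \<Psi> (take d w) * \<psi> (take L (drop d w)) else 0"
  show "pair z (\<lambda>w. ?P (x @ w @ y)) = 0"
  proof (cases "length x + e + length y = d + L + 1")
    case False
    then show ?thesis by (intro pair_zero_on) (auto dest: zl)
  next
    case tot: True
    show ?thesis
    proof (cases "length x + e \<le> d")
      case True
      define r where "r = d - length x - e"
      define C where "C = (if y ! (d + L - length x - e) = c then \<psi> (take L (drop r y)) else 0)"
      have "pair z (\<lambda>w. ?P (x @ w @ y)) = pair z (\<lambda>w. C * \<Psi> (x @ w @ take r y))"
      proof (rule pair_cong)
        fix w assume "z w \<noteq> 0"
        then have lw: "length w = e" by (rule zl)
        have t: "take d (x @ w @ y) = x @ w @ take r y" using True lw by (simp add: r_def)
        have dr: "drop d (x @ w @ y) = drop r y" using True lw by (simp add: r_def)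
        have nt: "(x @ w @ y) ! (d + L) = y ! (d + L - length x - e)"
          using True lw by (simp add: nth_append) arith
        show "?P (x @ w @ y) = C * \<Psi> (x @ w @ take r y)"
          unfolding t dr nt using tot lw by (simp add: C_def)
      qed
      also have "\<dots> = 0" unfolding pair_cmult using K1 j z x unfolding Kill_def by simp
      finally show ?thesis .
    next
      case False
      have xd: "d \<le> length x"
      proof (rule ccontr)
        assume "\<not> d \<le> length x"
        then have "length x < d" by simp
        obtain a b where "length x = N * a" "d = N * b" using Nx Nd by (auto elim!: dvdE)
        with \<open>length x < d\<close> have "a < b" by simp
        then have "N * (a + 1) \<le> N * b" by (intro mult_le_mono2) simp
        then show False using False eN \<open>length x = N * a\<close> \<open>d = N * b\<close> by simp
      qed
      have y1: "length y \<ge> 1"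
      proof (rule ccontr)
        assume "\<not> length y \<ge> 1"
        then have "length y = 0" by linarith
        then have "length x + e = d + (L + 1)" using tot by simp
        then have "length x + N = d + (L + 1) + 1" using eN by simp
        moreover have "N dvd d + (L + 1)" using Nd NL by (rule dvd_add)
        moreover have "N dvd length x + N" using Nx by simp
        ultimately have "N dvd 1" by (metis dvd_add_right_iff)
        then show False using N100 by simp
      qed
      define x' where "x' = drop d x"
      define r where "r = L - (length x - d) - e"
      define C where "C = (if y ! (d + L - length x - e) = c then \<Psi> (take d x) else 0)"
      have x'l: "length x' mod N = 0"
      proof -
        have "N dvd length x - d" using Nx Nd by (rule dvd_diff_nat)
        then show ?thesis by (simp add: x'_def dvd_eq_mod_eq_0)
      qed
      have "pair z (\<lambda>w. ?P (x @ w @ y)) = pair z (\<lambda>w. C * \<psi> (x' @ w @ take r y))"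
      proof (rule pair_cong)
        fix w assume "z w \<noteq> 0"
        then have lw: "length w = e" by (rule zl)
        have t: "take d (x @ w @ y) = take d x" using xd by simp
        have dr: "take L (drop d (x @ w @ y)) = x' @ w @ take r y"
          using xd lw tot y1 by (simp add: x'_def r_def)
        have nt: "(x @ w @ y) ! (d + L) = y ! (d + L - length x - e)"
          using xd lw tot y1 by (simp add: nth_append) arith
        show "?P (x @ w @ y) = C * \<psi> (x' @ w @ take r y)"
          unfolding t dr nt using tot lw by (simp add: C_def)
      qed
      also have "\<dots> = 0" unfolding pair_cmult using K2 j z x'l unfolding Kill_def N_def by simp
      finally show ?thesis .
    qed
  qed
qed




lemma interleave_0: "interleave 0 a m = mono []"
  by (simp add: interleave_def)

lemma interleave_Suc:
  "interleave (Suc n) a m = amul (amul (interleave n a m) (a (Suc n))) (gen (m (Suc n)))"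
  by (simp add: interleave_def)

lemma main_ind:
  fixes a :: "nat \<Rightarrow> 'k::field elt"
  assumes k: "k \<ge> 1"
    and fa: "\<forall>i\<in>{1..n}. a i \<in> Afree"
    and ha: "\<forall>i\<in>{1..n}. \<exists>p::nat. p > 0 \<and> a i \<in> Ahom (100 ^ (k^2) * p - 1)"
    and na: "\<forall>i\<in>{1..n}. a i \<notin> Bsum k"
  shows "n' \<le> n \<Longrightarrow> \<exists>\<Psi> d. interleave n' a m \<in> Ahom d \<and> 100^(k^2) dvd d \<and> Kill k \<Psi>
            \<and> pair (interleave n' a m) \<Psi> \<noteq> 0"
proof (induction n')
  case 0
  let ?\<Psi> = "\<lambda>w::nat list. if w = [] then 1 else (0::'k)"
  have "Kill k ?\<Psi>"
    unfolding Kill_def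
  proof (intro ballI allI impI)
    fix j z and x y :: "nat list"
    assume j: "j \<in> {1..k}" and z: "z \<in> (Zset j :: 'k elt set)"
    have "Zlen j > 0" using NN_ge[of j] j by (simp add: Zlen_def)
    then show "pair z (\<lambda>w. ?\<Psi> (x @ w @ y)) = 0"
      by (intro pair_zero_on) (auto dest: Zset_props(2)[OF z])
  qed
  moreover have "(mono [] :: 'k elt) \<in> Ahom 0" using fsupp_mono[of "[]"] by (simp add: Ahom_def mono_def)
  moreover have "pair (mono [] :: 'k elt) ?\<Psi> \<noteq> 0" by (simp add: pair_mono)
  ultimately show ?case unfolding interleave_0 by blast
next
  case (Suc n')
  then obtain \<Psi> d where IH: "interleave n' a m \<in> Ahom d" "100^(k^2) dvd d" "Kill k \<Psi>"
     "pair (interleave n' a m) \<Psi> \<noteq> 0" by auto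
  let ?i = "Suc n'"
  have i: "?i \<in> {1..n}" using Suc.prems by simp
  obtain p :: nat where p: "p > 0" "a ?i \<in> Ahom (100 ^ (k^2) * p - 1)" using ha i by blast
  define L where "L = 100 ^ (k^2) * p - 1"
  have L1: "L + 1 = 100 ^ (k^2) * p" using p(1) by (simp add: L_def)
  have faI: "fsupp (a ?i)" using fa i by (simp add: Afree_def)
  obtain \<psi> where \<psi>: "Kill k \<psi>" "pair (a ?i) \<psi> \<noteq> 0" using exists_Kill[OF faI] na i by blast
  let ?c = "m ?i"
  let ?P = "interleave n' a m"
  define \<Psi>' where "\<Psi>' = (\<lambda>w. if length w = d + L + 1 \<and> w ! (d + L) = ?c
                      then \<Psi> (take d w) * \<psi> (take L (drop d w)) else 0)"
  have K': "Kill k \<Psi>'" unfolding \<Psi>'_def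
    by (rule Kill_step[OF IH(3) \<psi>(1) IH(2)]) (simp only: L1 dvd_triv_left)
  have aL: "a ?i \<in> Ahom L" using p(2) by (simp add: L_def)
  have gen1: "(gen ?c :: 'k elt) \<in> Ahom 1" using fsupp_mono[of "[?c]"] by (simp add: Ahom_def gen_def mono_def)
  have Ah: "interleave ?i a m \<in> Ahom (d + L + 1)"
    unfolding interleave_Suc by (intro Ahom_amul IH(1) aL gen1)
  have dv: "100^(k^2) dvd d + L + 1"
  proof -
    have "100^(k^2) dvd d + (L + 1)" unfolding L1 using IH(2) by (intro dvd_add) simp_all
    then show ?thesis by (simp only: add.assoc)
  qed
  have fP: "fsupp ?P" using IH(1) by (simp add: Ahom_def)
  have fPa: "fsupp (amul ?P (a ?i))" using fsupp_amul[OF fP faI] .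
  have fg: "fsupp (gen ?c :: 'k elt)" by (simp add: gen_def fsupp_mono)
  have "pair (interleave ?i a m) \<Psi>' = pair ?P (\<lambda>x. pair (a ?i) (\<lambda>v. \<Psi>' ((x @ v) @ [?c])))"
    unfolding interleave_Suc pair_amul1[OF fPa fg] pair_gen pair_amul1[OF fP faI] ..
  also have "\<dots> = pair ?P (\<lambda>x. pair (a ?i) (\<lambda>v. \<Psi> x * \<psi> v))"
  proof (rule pair_cong, rule pair_cong)
    fix x v assume "?P x \<noteq> 0" "a ?i v \<noteq> 0"
    then have "length x = d" "length v = L" using IH(1) aL by (auto simp: Ahom_def)
    then show "\<Psi>' ((x @ v) @ [?c]) = \<Psi> x * \<psi> v" by (simp add: \<Psi>'_def nth_append)
  qed
  also have "\<dots> = pair ?P \<Psi> * pair (a ?i) \<psi>"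
    by (simp add: pair_cmult pair_multc)
  finally have "pair (interleave ?i a m) \<Psi>' \<noteq> 0" using IH(4) \<psi>(2) by simp
  then show ?case using Ah dv K' by blast
qed

theorem mainTheorem5:
  fixes k n :: nat and a :: "nat \<Rightarrow> 'k::field elt" and m :: "nat \<Rightarrow> nat"
  assumes "k \<ge> 1" and "n \<ge> 1"
    and "\<forall>i\<in>{1..n}. a i \<in> Afree"
    and "\<forall>i\<in>{1..n}. \<exists>p::nat. p > 0 \<and> a i \<in> Ahom (100 ^ (k^2) * p - 1)"
    and "\<forall>i\<in>{1..n}. a i \<notin> Bsum k"
  shows "interleave n a m \<notin> Bsum k"
proof
  assume B: "interleave n a m \<in> Bsum k"
  obtain \<Psi> d where "Kill k \<Psi>" "pair (interleave n a m) \<Psi> \<noteq> 0"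
    using main_ind[OF assms(1,3,4,5), of n m] by auto
  then show False using Kill_Bsum[OF _ B] by blast
qed


end
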